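(* Let $c>0$, $\alpha,\alpha'\in\mathcal{P}^2(\mathbb{T}^d\times U)$, $\eta\in\mathcal{P}^2(\mathbb{T}^d\times U\times\mathbb{B}_c)$ with $\mathrm{p}^{1,2}{}_\#\eta=\alpha$, $\tau,\theta>0$, and let $\pi\in\Pi^0(\alpha',\alpha)$ be an optimal plan between $\alpha'$ and $\alpha$. Then $$W_2(\Xi^\tau{}_\#\eta,\Xi^\theta{}_\#(\pi*\eta))\le W_2(\alpha,\alpha')+|\tau-\theta|\,c.$$
   Context: $\mathbb{T}^d=\mathbb{R}^d/\mathbb{Z}^d$ with distance $\|x-y\|=\inf\{\|x'-y'\|:x'\in x,y'\in y\}$; $\mathbb{B}_c$ is the ball of radius $c$ in $\mathbb{R}^d$ centered at $0$. $U$ is a compact space with metric $\hat\rho_U$, and $\mathbb{T}^d\times U$ carries the metric $[\|x-x'\|^2+\hat\rho_U(u,u')^2]^{1/2}$; $W_2$ is the 2-Wasserstein distance for this metric, and $\Pi^0(\alpha',\alpha)$ is the set of transport plans between $\alpha'$ and $\alpha$ attaining $W_2(\alpha',\alpha)^2$. $\Xi^\tau:\mathbb{T}^d\times U\times\mathbb{R}^d\to\mathbb{T}^d\times U$, $\Xi^\tau(x,u,w)=(x+\tau w,u)$. For $\pi$ a plan on $(\mathbb{T}^d\times U)\times(\mathbb{T}^d\times U)$ with marginals $\alpha',\alpha$ and $\eta$ with disintegration $\eta(dw|(x,u))$ along $\alpha$, the composition $\pi*\eta$ is the probability on $\mathbb{T}^d\times U\times\mathbb{R}^d$ defined by $\int\phi(x',u',w)(\pi*\eta)(d(x',u',w))=\int\int\phi(x',u',w)\eta(dw|(x,u))\pi(d((x',u'),(x,u)))$.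 $\mathrm{p}^{1,2}$ is projection on the first two components, $h_\#$ the push-forward. *)

theory Defs
  imports "HOL-Probability.Probability"
begin

text \<open>The torus T^d is represented by the fundamental domain [0,1)^d inside (real^'n);
  points of T^d x U are pairs (x,u) with x in [0,1)^d and u in U.\<close>

definition tor :: "(real^'n) set" where
  "tor = {x. \<forall>i. 0 \<le> x$i \<and> x$i < 1}"

definition tmod :: "(real^'n) \<Rightarrow> (real^'n)" where
  "tmod x = (\<chi> i. frac (x$i))"

definition tdist :: "(real^'n) \<Rightarrow> (real^'n) \<Rightarrow> real" where
  "tdist x y = (INF k\<in>{k::(real^'n). \<forall>i. k$i \<in> \<int>}. norm (x - y - k))"

definition pdist :: "((real^'n) \<times> 'u::metric_space) \<Rightarrow> ((real^'n) \<times> 'u) \<Rightarrow> real" where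
  "pdist p q = sqrt ((tdist (fst p) (fst q))^2 + (dist (snd p) (snd q))^2)"

text \<open>Probability measures on T^d x U (finite second moment is automatic by compactness).\<close>
definition P2 :: "'u::metric_space set \<Rightarrow> ((real^'n) \<times> 'u) measure \<Rightarrow> bool" where
  "P2 U \<mu> \<longleftrightarrow> prob_space \<mu> \<and> sets \<mu> = sets borel \<and> (AE z in \<mu>. z \<in> tor \<times> U)"

definition couplings :: "((real^'n) \<times> 'u::metric_space) measure \<Rightarrow> ((real^'n) \<times> 'u) measure
    \<Rightarrow> (((real^'n) \<times> 'u) \<times> ((real^'n) \<times> 'u)) measure set" where
  "couplings \<mu> \<nu> = {\<pi>. prob_space \<pi> \<and> sets \<pi> = sets borel \<and>
      distr \<pi> borel fst = \<mu> \<and> distr \<pi> borel snd = \<nu>}"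

definition W2cost :: "(((real^'n) \<times> 'u::metric_space) \<times> ((real^'n) \<times> 'u)) measure \<Rightarrow> ennreal" where
  "W2cost \<pi> = (\<integral>\<^sup>+ z. ennreal ((pdist (fst z) (snd z))^2) \<partial>\<pi>)"

definition W2 :: "((real^'n) \<times> 'u::metric_space) measure \<Rightarrow> ((real^'n) \<times> 'u) measure \<Rightarrow> real" where
  "W2 \<mu> \<nu> = sqrt (enn2real (INF \<pi>\<in>couplings \<mu> \<nu>. W2cost \<pi>))"

definition optimal_plans :: "((real^'n) \<times> 'u::metric_space) measure \<Rightarrow> ((real^'n) \<times> 'u) measure
    \<Rightarrow> (((real^'n) \<times> 'u) \<times> ((real^'n) \<times> 'u)) measure set" where
  "optimal_plans \<mu> \<nu> = {\<pi> \<in> couplings \<mu> \<nu>. W2cost \<pi> = (INF \<rho>\<in>couplings \<mu> \<nu>. W2cost \<rho>)}"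

definition Xi :: "real \<Rightarrow> (((real^'n) \<times> 'u) \<times> (real^'n)) \<Rightarrow> ((real^'n) \<times> 'u)" where
  "Xi \<tau> p = (tmod (fst (fst p) + \<tau> *\<^sub>R snd p), snd (fst p))"

text \<open>Composition pi * eta, where K z = eta(dw | z) is the disintegration of eta along alpha.\<close>
definition compose_plan :: "(((real^'n) \<times> 'u::metric_space) \<times> ((real^'n) \<times> 'u)) measure
    \<Rightarrow> (((real^'n) \<times> 'u) \<Rightarrow> (real^'n) measure) \<Rightarrow> (((real^'n) \<times> 'u) \<times> (real^'n)) measure" where
  "compose_plan \<pi> K = bind \<pi> (\<lambda>p. distr (K (snd p)) borel (\<lambda>w. (fst p, w)))"

end

theory Submission
  imports Defs
begin
lemma sets_borel_prod_sc:
  "sets (borel :: ('a::second_countable_topology \<times> 'b::topological_space) measure) = sets (borel \<Otimes>\<^sub>M borel)"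
proof
  show "sets (borel \<Otimes>\<^sub>M borel) \<subseteq> sets (borel :: ('a \<times> 'b) measure)"
  proof -
    have "(\<lambda>x. (fst x, snd x)) \<in> (borel :: ('a \<times> 'b) measure) \<rightarrow>\<^sub>M (borel \<Otimes>\<^sub>M borel)"
      by (intro measurable_Pair borel_measurable_continuous_onI continuous_intros)
    then show ?thesis
      by (auto dest!: measurable_sets simp: space_pair_measure)
  qed
next
  obtain B :: "'a set set" where B: "countable B" "topological_basis B"
    using ex_countable_basis by blast
  have "S \<in> sets (borel \<Otimes>\<^sub>M borel)" if S: "open S" for S :: "('a \<times> 'b) set"
  proof -
    define O' where "O' b = \<Union>{V. open V \<and> b \<times> V \<subseteq> S}" for b
    have eq: "S = (\<Union>b\<in>B. b \<times> O' b)"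
    proof
      show "S \<subseteq> (\<Union>b\<in>B. b \<times> O' b)"
      proof
        fix z assume "z \<in> S"
        then obtain A V where AV: "open A" "open V" "fst z \<in> A" "snd z \<in> V" "A \<times> V \<subseteq> S"
          using S by (metis open_prod_elim mem_Sigma_iff prod.collapse)
        then obtain b where b: "b \<in> B" "fst z \<in> b" "b \<subseteq> A"
          using topological_basisE[OF B(2) AV(1) AV(3)] by blast
        then have "b \<times> V \<subseteq> S" using AV by blast
        then have "snd z \<in> O' b" using AV unfolding O'_def by blast
        then show "z \<in> (\<Union>b\<in>B. b \<times> O' b)" using b by (cases z) auto
      qed
      show "(\<Union>b\<in>B. b \<times> O' b) \<subseteq> S" unfolding O'_def by blast
    qed
    have "(\<Union>b\<in>B. b \<times> O' b) \<in> sets (borel \<Otimes>\<^sub>M borel)"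
    proof (rule sets.countable_UN'')
      show "countable B" by fact
    next
      fix b assume "b \<in> B"
      then have "open b" using B(2) topological_basis_open by blast
      moreover have "open (O' b)" unfolding O'_def by auto
      ultimately show "b \<times> O' b \<in> sets (borel \<Otimes>\<^sub>M borel)"
        by (intro pair_measureI) auto
    qed
    then show ?thesis using eq by simp
  qed
  then show "sets (borel :: ('a \<times> 'b) measure) \<subseteq> sets (borel \<Otimes>\<^sub>M borel)"
    unfolding sets_borel
    by (intro sets.sigma_sets_subset') (auto simp: space_pair_measure)
qed
definition td :: "real^'n \<Rightarrow> real" where
  "td v = (INF k\<in>{k::(real^'n). \<forall>i. k$i \<in> \<int>}. norm (v - k))"

lemma tdist_td: "tdist x y = td (x - y)"
  unfolding tdist_def td_def by simp

lemma td_bdd: "bdd_below ((\<lambda>k. norm (v - k)) ` {k::(real^'n). \<forall>i. k$i \<in> \<int>})"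
  by (rule bdd_belowI[of _ 0]) auto

lemma td_ne: "{k::(real^'n). \<forall>i. k$i \<in> \<int>} \<noteq> {}"
  by (auto intro!: exI[of _ 0])

lemma td_nonneg: "0 \<le> td v"
  unfolding td_def by (rule cINF_greatest[OF td_ne]) auto

lemma td_le: "\<forall>i. k$i \<in> \<int> \<Longrightarrow> td v \<le> norm (v - k)"
  unfolding td_def by (rule cINF_lower[OF td_bdd]) auto

lemma td_shift_le:
  fixes k v v' :: "real^'n"
  assumes k: "\<forall>i. k$i \<in> \<int>"
  shows "td v \<le> td v' + norm (v - v' - k)"
proof -
  have "td v - norm (v - v' - k) \<le> td v'"
    unfolding td_def[of v']
  proof (rule cINF_greatest[OF td_ne])
    fix k' :: "real^'n" assume "k' \<in> {k. \<forall>i. k$i \<in> \<int>}"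
    then have "\<forall>i. (k + k')$i \<in> \<int>" using k by auto
    then have "td v \<le> norm (v - (k + k'))" by (rule td_le)
    also have "\<dots> \<le> norm (v' - k') + norm (v - v' - k)"
      using norm_triangle_ineq[of "v' - k'" "v - v' - k"] by (simp add: algebra_simps)
    finally show "td v - norm (v - v' - k) \<le> norm (v' - k')" by simp
  qed
  then show ?thesis by simp
qed

lemma td_lip: "td v \<le> td v' + norm (v - v')"
  using td_shift_le[of 0 v v'] by simp

lemma td_uminus: "td (- v) = td v"
proof -
  have *: "td (- w) \<le> td w" for w :: "real^'n"
    unfolding td_def[of w]
  proof (rule cINF_greatest[OF td_ne])
    fix k :: "real^'n" assume "k \<in> {k. \<forall>i. k$i \<in> \<int>}"
    then have "\<forall>i. (- k)$i \<in> \<int>" by auto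
    then have "td (- w) \<le> norm (- w - (- k))" by (rule td_le)
    also have "\<dots> = norm (w - k)" by (metis minus_diff_eq minus_diff_minus norm_minus_cancel)
    finally show "td (- w) \<le> norm (w - k)" .
  qed
  show ?thesis using *[of v] *[of "- v"] by simp
qed

lemma tdist_sym: "tdist x y = tdist y x"
  unfolding tdist_td by (metis minus_diff_eq td_uminus)

lemma td_cont: "continuous_on UNIV td"
proof -
  have "dist (td v) (td v') \<le> 1 * dist v v'" for v v' :: "real^'n"
    using td_lip[of v v'] td_lip[of v' v] by (simp add: dist_real_def dist_norm norm_minus_commute)
  then have "lipschitz_on 1 UNIV td" by (intro lipschitz_onI) auto
  then show ?thesis by (rule lipschitz_on_continuous_on)
qed

lemma tmod_eq: "tmod y = y - (\<chi> i. of_int (floor (y$i)))"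
  by (simp add: tmod_def vec_eq_iff frac_def)

lemma td_Xi:
  fixes x x' w :: "real^'n"
  shows "td (tmod (x + a *\<^sub>R w) - tmod (x' + b *\<^sub>R w)) \<le> td (x - x') + \<bar>a - b\<bar> * norm w"
proof -
  define m :: "real^'n" where "m = (\<chi> i. of_int (floor ((x' + b *\<^sub>R w)$i)) - of_int (floor ((x + a *\<^sub>R w)$i)))"
  have mi: "\<forall>i. m$i \<in> \<int>" unfolding m_def by auto
  have "tmod (x + a *\<^sub>R w) - tmod (x' + b *\<^sub>R w) - (x - x') - m = (a - b) *\<^sub>R w"
    unfolding tmod_eq m_def by (simp add: vec_eq_iff algebra_simps)
  then show ?thesis using td_shift_le[OF mi, of "tmod (x + a *\<^sub>R w) - tmod (x' + b *\<^sub>R w)" "x - x'"]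
    by simp
qed

lemma sqrt_bound:
  fixes T t d e :: real
  assumes "0 \<le> T" "T \<le> t + e" "0 \<le> t" "0 \<le> e"
  shows "sqrt (T^2 + d^2) \<le> sqrt (t^2 + d^2) + e"
proof -
  have "T^2 \<le> (t + e)^2" using assms by (intro power_mono) auto
  then have "sqrt (T^2 + d^2) \<le> sqrt ((t+e)^2 + d^2)" by simp
  also have "\<dots> \<le> sqrt (t^2 + d^2) + e"
  proof (rule real_le_lsqrt)
    show "0 \<le> sqrt (t^2 + d^2) + e" using assms by simp
    have "t \<le> sqrt (t^2 + d^2)" by (simp add: real_le_rsqrt)
    then have "(t+e)^2 + d^2 \<le> t^2 + d^2 + 2 * e * sqrt (t^2 + d^2) + e^2"
      using assms by (simp add: power2_eq_square algebra_simps mult_left_mono)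
    also have "\<dots> = (sqrt (t^2 + d^2) + e)^2"
      by (simp add: power2_eq_square algebra_simps)
    finally show "(t+e)^2 + d^2 \<le> (sqrt (t^2 + d^2) + e)^2" .
  qed
  finally show ?thesis .
qed

lemma pdist_Xi:
  fixes p p' :: "(real^'n) \<times> 'u::metric_space" and w :: "real^'n"
  shows "pdist (Xi a (p, w)) (Xi b (p', w)) \<le> pdist p p' + \<bar>a - b\<bar> * norm w"
  unfolding pdist_def Xi_def tdist_td
  by (auto intro!: sqrt_bound td_Xi td_nonneg)

lemma pdist_sym: "pdist p q = pdist q p"
  unfolding pdist_def by (simp add: tdist_sym dist_commute)

lemma pdist_cont: "continuous_on UNIV (\<lambda>z::((real^'n) \<times> 'u::metric_space) \<times> ((real^'n) \<times> 'u). pdist (fst z) (snd z))"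
  unfolding pdist_def tdist_td
  by (intro continuous_intros continuous_on_compose2[OF td_cont]) auto

lemma tmod_meas: "tmod \<in> borel_measurable (borel :: (real^'n) measure)"
proof (subst borel_measurable_euclidean_space, intro ballI)
  fix b :: "real^'n" assume "b \<in> Basis"
  then obtain i where b: "b = axis i 1" by (auto simp: Basis_vec_def)
  have "(\<lambda>x. tmod x \<bullet> b) = (\<lambda>x. (x$i) - real_of_int (floor (x$i)))"
    by (auto simp: b tmod_def inner_axis frac_def)
  moreover have "(\<lambda>x::real^'n. x$i) \<in> borel_measurable borel"
    by (intro borel_measurable_continuous_onI continuous_intros)
  ultimately show "(\<lambda>x. tmod x \<bullet> b) \<in> borel_measurable borel"
    using borel_measurable_real_floor by simp
qed


lemma measurable_Pair_sc1:
  fixes f :: "'c \<Rightarrow> 'a::second_countable_topology" and g :: "'c \<Rightarrow> 'b::topological_space"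
  assumes "f \<in> M \<rightarrow>\<^sub>M borel" "g \<in> M \<rightarrow>\<^sub>M borel"
  shows "(\<lambda>x. (f x, g x)) \<in> M \<rightarrow>\<^sub>M borel"
  using measurable_Pair[OF assms] measurable_cong_sets[OF refl sets_borel_prod_sc] by blast

lemma measurable_Pair_sc2:
  fixes f :: "'c \<Rightarrow> 'a::topological_space" and g :: "'c \<Rightarrow> 'b::second_countable_topology"
  assumes "f \<in> M \<rightarrow>\<^sub>M borel" "g \<in> M \<rightarrow>\<^sub>M borel"
  shows "(\<lambda>x. (f x, g x)) \<in> M \<rightarrow>\<^sub>M borel"
proof -
  have 1: "(\<lambda>x. (g x, f x)) \<in> M \<rightarrow>\<^sub>M borel" by (rule measurable_Pair_sc1[OF assms(2,1)])
  have 2: "(\<lambda>z::('b \<times> 'a). (snd z, fst z)) \<in> borel \<rightarrow>\<^sub>M borel"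
    by (intro borel_measurable_continuous_onI continuous_intros)
  show ?thesis using measurable_compose[OF 1 2] by simp
qed

lemma cont_meas: "continuous_on UNIV f \<Longrightarrow> f \<in> borel \<rightarrow>\<^sub>M borel"
  by (rule borel_measurable_continuous_onI)

lemma swap_coupling:
  fixes \<sigma> :: "(((real^'n) \<times> 'u::metric_space) \<times> ((real^'n) \<times> 'u)) measure"
  assumes "\<sigma> \<in> couplings \<mu> \<nu>"
  shows "distr \<sigma> borel (\<lambda>z. (snd z, fst z)) \<in> couplings \<nu> \<mu>"
    and "W2cost (distr \<sigma> borel (\<lambda>z. (snd z, fst z))) = W2cost \<sigma>"
proof -
  have s: "sets \<sigma> = sets borel" "prob_space \<sigma>" "distr \<sigma> borel fst = \<mu>" "distr \<sigma> borel snd = \<nu>"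
    using assms by (auto simp: couplings_def)
  have sw: "(\<lambda>z::(((real^'n) \<times> 'u) \<times> ((real^'n) \<times> 'u)). (snd z, fst z)) \<in> \<sigma> \<rightarrow>\<^sub>M borel"
    by (subst measurable_cong_sets[OF s(1) refl]) (auto intro!: cont_meas continuous_intros)
  have fs: "fst \<in> (borel :: (((real^'n) \<times> 'u) \<times> ((real^'n) \<times> 'u)) measure) \<rightarrow>\<^sub>M borel"
           "snd \<in> (borel :: (((real^'n) \<times> 'u) \<times> ((real^'n) \<times> 'u)) measure) \<rightarrow>\<^sub>M borel"
    by (auto intro!: cont_meas continuous_intros)
  show "distr \<sigma> borel (\<lambda>z. (snd z, fst z)) \<in> couplings \<nu> \<mu>"
    unfolding couplings_def
    using s sw prob_space.prob_space_distr[OF s(2) sw]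
    by (simp add: distr_distr[OF fs(1) sw] distr_distr[OF fs(2) sw] comp_def)
  have pm: "(\<lambda>z::(((real^'n) \<times> 'u) \<times> ((real^'n) \<times> 'u)). ennreal ((pdist (fst z) (snd z))^2)) \<in> borel_measurable borel"
    using cont_meas[OF pdist_cont] by measurable
  show "W2cost (distr \<sigma> borel (\<lambda>z. (snd z, fst z))) = W2cost \<sigma>"
    unfolding W2cost_def
  proof (subst nn_integral_distr[OF sw])
    show "(\<lambda>z. ennreal ((pdist (fst z) (snd z))\<^sup>2)) \<in> borel_measurable (distr \<sigma> borel (\<lambda>z. (snd z, fst z)))"
      using pm by simp
    have "\<And>z::(((real^'n) \<times> 'u) \<times> ((real^'n) \<times> 'u)). pdist (snd z) (fst z) = pdist (fst z) (snd z)"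
      by (rule pdist_sym)
    then show "(\<integral>\<^sup>+ x. ennreal ((pdist (fst (snd x, fst x)) (snd (snd x, fst x)))\<^sup>2) \<partial>\<sigma>) =
      (\<integral>\<^sup>+ z. ennreal ((pdist (fst z) (snd z))\<^sup>2) \<partial>\<sigma>)" by (simp only: fst_conv snd_conv)
  qed
qed

lemma INF_couplings_le:
  fixes \<mu> \<nu> :: "((real^'n) \<times> 'u::metric_space) measure"
  shows "(INF \<sigma>\<in>couplings \<mu> \<nu>. W2cost \<sigma>) \<le> (INF \<sigma>\<in>couplings \<nu> \<mu>. W2cost \<sigma>)"
proof (rule INF_greatest)
  fix \<sigma> assume "\<sigma> \<in> couplings \<nu> \<mu>"
  note h = swap_coupling[OF this]
  have "(INF \<sigma>\<in>couplings \<mu> \<nu>. W2cost \<sigma>) \<le> W2cost (distr \<sigma> borel (\<lambda>z. (snd z, fst z)))"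
    using h(1) by (rule INF_lower)
  then show "(INF \<sigma>\<in>couplings \<mu> \<nu>. W2cost \<sigma>) \<le> W2cost \<sigma>"
    using h(2) by simp
qed

lemma INF_couplings_sym:
  fixes \<mu> \<nu> :: "((real^'n) \<times> 'u::metric_space) measure"
  shows "(INF \<sigma>\<in>couplings \<mu> \<nu>. W2cost \<sigma>) = (INF \<sigma>\<in>couplings \<nu> \<mu>. W2cost \<sigma>)"
  using INF_couplings_le[of \<mu> \<nu>] INF_couplings_le[of \<nu> \<mu>] by (rule antisym)

lemma Xi_meas: "Xi t \<in> (borel :: (((real^'n) \<times> 'u::metric_space) \<times> (real^'n)) measure) \<rightarrow>\<^sub>M borel"
proof -
  have c: "continuous_on UNIV (\<lambda>p::((real^'n) \<times> 'u) \<times> (real^'n). fst (fst p) + t *\<^sub>R snd p)"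
    by (intro continuous_intros)
  have "(\<lambda>p::((real^'n) \<times> 'u) \<times> (real^'n). tmod (fst (fst p) + t *\<^sub>R snd p)) \<in> borel \<rightarrow>\<^sub>M borel"
    using measurable_compose[OF cont_meas[OF c] tmod_meas] by simp
  moreover have "(\<lambda>p::((real^'n) \<times> 'u) \<times> (real^'n). snd (fst p)) \<in> borel \<rightarrow>\<^sub>M borel"
    by (auto intro!: cont_meas continuous_intros)
  ultimately show ?thesis unfolding Xi_def[abs_def] by (rule measurable_Pair_sc1)
qed

lemma G_meas:
  "(\<lambda>q::(((real^'n) \<times> 'u::metric_space) \<times> ((real^'n) \<times> 'u)) \<times> (real^'n).
      (Xi a (snd (fst q), snd q), Xi b (fst (fst q), snd q))) \<in> borel \<rightarrow>\<^sub>M borel"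
proof -
  define H :: "((real^'n) \<times> (real^'n)) \<times> ('u \<times> 'u) \<Rightarrow> ((real^'n) \<times> 'u) \<times> ((real^'n) \<times> 'u)"
    where "H z = ((fst (fst z), fst (snd z)), (snd (fst z), snd (snd z)))" for z
  have H: "H \<in> borel \<rightarrow>\<^sub>M borel" unfolding H_def[abs_def] by (auto intro!: cont_meas continuous_intros)
  have t1c: "continuous_on UNIV (\<lambda>q::(((real^'n) \<times> 'u) \<times> ((real^'n) \<times> 'u)) \<times> (real^'n). fst (snd (fst q)) + a *\<^sub>R snd q)"
    by (intro continuous_intros)
  have t1: "(\<lambda>q::(((real^'n) \<times> 'u) \<times> ((real^'n) \<times> 'u)) \<times> (real^'n). tmod (fst (snd (fst q)) + a *\<^sub>R snd q)) \<in> borel \<rightarrow>\<^sub>M borel"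
    using measurable_compose[OF cont_meas[OF t1c] tmod_meas] by simp
  have t2c: "continuous_on UNIV (\<lambda>q::(((real^'n) \<times> 'u) \<times> ((real^'n) \<times> 'u)) \<times> (real^'n). fst (fst (fst q)) + b *\<^sub>R snd q)"
    by (intro continuous_intros)
  have t2: "(\<lambda>q::(((real^'n) \<times> 'u) \<times> ((real^'n) \<times> 'u)) \<times> (real^'n). tmod (fst (fst (fst q)) + b *\<^sub>R snd q)) \<in> borel \<rightarrow>\<^sub>M borel"
    using measurable_compose[OF cont_meas[OF t2c] tmod_meas] by simp
  have u: "(\<lambda>q::(((real^'n) \<times> 'u) \<times> ((real^'n) \<times> 'u)) \<times> (real^'n). (snd (snd (fst q)), snd (fst (fst q)))) \<in> borel \<rightarrow>\<^sub>M borel"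
    by (auto intro!: cont_meas continuous_intros)
  have L: "(\<lambda>q::(((real^'n) \<times> 'u) \<times> ((real^'n) \<times> 'u)) \<times> (real^'n). ((tmod (fst (snd (fst q)) + a *\<^sub>R snd q), tmod (fst (fst (fst q)) + b *\<^sub>R snd q)),
                 (snd (snd (fst q)), snd (fst (fst q))))) \<in> borel \<rightarrow>\<^sub>M borel"
    by (rule measurable_Pair_sc1[OF measurable_Pair_sc1[OF t1 t2] u])
  have "(\<lambda>q::(((real^'n) \<times> 'u) \<times> ((real^'n) \<times> 'u)) \<times> (real^'n).
      (Xi a (snd (fst q), snd q), Xi b (fst (fst q), snd q))) =
     (\<lambda>q. H ((tmod (fst (snd (fst q)) + a *\<^sub>R snd q), tmod (fst (fst (fst q)) + b *\<^sub>R snd q)),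
                 (snd (snd (fst q)), snd (fst (fst q)))))"
    by (simp add: H_def Xi_def)
  then show ?thesis using measurable_compose[OF L H] by (simp only:)
qed

lemma kernel_meas:
  fixes K :: "'a::topological_space \<Rightarrow> (real^'n) measure"
  assumes K: "K \<in> borel \<rightarrow>\<^sub>M subprob_algebra borel" and g: "g \<in> (borel :: 'b::topological_space measure) \<rightarrow>\<^sub>M borel"
  shows "(\<lambda>p. distr (K (g p)) borel (\<lambda>w. (p, w))) \<in> (borel :: 'b measure) \<rightarrow>\<^sub>M subprob_algebra borel"
proof (rule measurable_distr2[where f = "\<lambda>p w. (p, w)" and g = "\<lambda>p. K (g p)" and L = borel and M = borel and N = borel])
  show "(\<lambda>p. K (g p)) \<in> borel \<rightarrow>\<^sub>M subprob_algebra borel" using measurable_compose[OF g K] .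
  have "(\<lambda>x. (fst x, snd x)) \<in> ((borel :: 'b measure) \<Otimes>\<^sub>M (borel :: (real^'n) measure)) \<rightarrow>\<^sub>M borel"
    by (rule measurable_Pair_sc2[OF measurable_fst measurable_snd])
  then show "(\<lambda>(p, w). (p, w)) \<in> ((borel :: 'b measure) \<Otimes>\<^sub>M (borel :: (real^'n) measure)) \<rightarrow>\<^sub>M borel"
    by simp
qed

lemma minkowski_aux:
  fixes a :: "'a \<Rightarrow> real"
  assumes P: "prob_space M" and am: "a \<in> borel_measurable M" and a0: "\<And>x. 0 \<le> a x"
    and I: "(\<integral>\<^sup>+x. ennreal ((a x)^2) \<partial>M) = ennreal (W^2)" and W0: "0 \<le> W" and b0: "0 \<le> b"
  shows "(\<integral>\<^sup>+x. ennreal ((a x + b)^2) \<partial>M) \<le> ennreal ((W + b)^2)"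
proof (cases "W = 0")
  case True
  have "AE x in M. ennreal ((a x)^2) = 0"
    using I True am by (subst nn_integral_0_iff_AE[symmetric]) auto
  then have "AE x in M. ennreal ((a x + b)^2) = ennreal (b^2)"
    by (rule eventually_mono) (simp add: ennreal_eq_0_iff)
  then have "(\<integral>\<^sup>+x. ennreal ((a x + b)^2) \<partial>M) = (\<integral>\<^sup>+x. ennreal (b^2) \<partial>M)"
    by (rule nn_integral_cong_AE)
  also have "\<dots> = ennreal (b^2)"
    using prob_space.emeasure_space_1[OF P] by simp
  finally show ?thesis using True by simp
next
  case False
  then have Wp: "0 < W" using W0 by simp
  have pt: "(a x + b)^2 \<le> (1 + b / W) * (a x)^2 + (b^2 + b * W)" for x
  proof -
    have "0 \<le> (a x - W)^2" by simp
    then have "2 * a x * W \<le> (a x)^2 + W^2"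
      by (simp add: power2_diff algebra_simps)
    then have "2 * a x \<le> (a x)^2 / W + W"
      using Wp by (simp add: field_simps power2_eq_square)
    then have "b * (2 * a x) \<le> b * ((a x)^2 / W + W)"
      using b0 by (rule mult_left_mono)
    then show ?thesis
      using Wp by (simp add: field_simps power2_eq_square)
  qed
  have "(\<integral>\<^sup>+x. ennreal ((a x + b)^2) \<partial>M) \<le>
        (\<integral>\<^sup>+x. ennreal (1 + b / W) * ennreal ((a x)^2) + ennreal (b^2 + b * W) \<partial>M)"
    by (rule nn_integral_mono) (use pt Wp b0 in \<open>simp add: ennreal_mult[symmetric] ennreal_plus[symmetric] del: ennreal_plus\<close>)
  also have "\<dots> = ennreal (1 + b / W) * (\<integral>\<^sup>+x. ennreal ((a x)^2) \<partial>M) + (\<integral>\<^sup>+x. ennreal (b^2 + b * W) \<partial>M)"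
    using am by (subst nn_integral_add) (auto simp: nn_integral_cmult)
  also have "\<dots> = ennreal (1 + b / W) * ennreal (W^2) + ennreal (b^2 + b * W)"
    using prob_space.emeasure_space_1[OF P] I by simp
  also have "\<dots> = ennreal ((1 + b / W) * W^2 + (b^2 + b * W))"
    using Wp b0 by (simp add: ennreal_mult[symmetric] ennreal_plus[symmetric] del: ennreal_plus)
  also have "(1 + b / W) * W^2 + (b^2 + b * W) = (W + b)^2"
    using Wp by (simp add: field_simps power2_eq_square)
  finally show ?thesis .
qed

lemma pair_const_meas:
  assumes "sets M = sets (borel::(real^'n) measure)"
  shows "(\<lambda>w. (p::'a::topological_space, w)) \<in> M \<rightarrow>\<^sub>M borel"
  by (subst measurable_cong_sets[OF assms refl]) (auto intro!: cont_meas continuous_intros)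

theorem lemma1:
  fixes c \<tau> \<theta> :: real
    and U :: "'u::metric_space set"
    and \<alpha> \<alpha>' :: "((real^'n) \<times> 'u) measure"
    and \<eta> :: "(((real^'n) \<times> 'u) \<times> (real^'n)) measure"
    and \<pi> :: "(((real^'n) \<times> 'u) \<times> ((real^'n) \<times> 'u)) measure"
    and K :: "((real^'n) \<times> 'u) \<Rightarrow> (real^'n) measure"
  assumes "c > 0"
    and "compact U"
    and "P2 U \<alpha>" and "P2 U \<alpha>'"
    and "prob_space \<eta>" and "sets \<eta> = sets borel"
    and "AE p in \<eta>. fst p \<in> tor \<times> U \<and> snd p \<in> cball 0 c"
    and "distr \<eta> borel fst = \<alpha>"
    and "\<tau> > 0" and "\<theta> > 0"
    and "\<pi> \<in> optimal_plans \<alpha>' \<alpha>"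
    and "K \<in> measurable borel (subprob_algebra borel)"
    and "\<forall>z. prob_space (K z)"
    and "\<eta> = bind \<alpha> (\<lambda>z. distr (K z) borel (\<lambda>w. (z, w)))"
  shows "W2 (distr \<eta> borel (Xi \<tau>)) (distr (compose_plan \<pi> K) borel (Xi \<theta>))
           \<le> W2 \<alpha> \<alpha>' + \<bar>\<tau> - \<theta>\<bar> * c"
proof -
  define B where "B = \<bar>\<tau> - \<theta>\<bar> * c"
  have B0: "0 \<le> B" unfolding B_def using assms(1) by simp
  have \<pi>: "prob_space \<pi>" "sets \<pi> = sets borel" "distr \<pi> borel fst = \<alpha>'" "distr \<pi> borel snd = \<alpha>"
       "W2cost \<pi> = (INF \<rho>\<in>couplings \<alpha>' \<alpha>. W2cost \<rho>)"
    using assms(11) by (auto simp: optimal_plans_def couplings_def)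
  have \<pi>ne: "space \<pi> \<noteq> {}" using prob_space.not_empty[OF \<pi>(1)] .
  have Kmeas: "K \<in> borel \<rightarrow>\<^sub>M subprob_algebra borel" by (rule assms(12))
  have Ksets: "sets (K z) = sets borel" for z using sets_kernel[OF Kmeas] by simp
  have Kprob: "prob_space (K z)" for z using assms(13) by blast
  define k\<rho> where "k\<rho> p = distr (K (snd p)) borel (\<lambda>w. (p, w))" for p :: "((real^'n) \<times> 'u) \<times> ((real^'n) \<times> 'u)"
  define k\<eta> where "k\<eta> z = distr (K z) borel (\<lambda>w. (z, w))" for z :: "(real^'n) \<times> 'u"
  have k\<rho>m: "k\<rho> \<in> borel \<rightarrow>\<^sub>M subprob_algebra borel"
    unfolding k\<rho>_def[abs_def]
    by (rule kernel_meas[OF Kmeas, of "\<lambda>p. snd p"]) (auto intro!: cont_meas continuous_intros)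
  have k\<rho>m': "k\<rho> \<in> \<pi> \<rightarrow>\<^sub>M subprob_algebra borel"
    by (subst measurable_cong_sets[OF \<pi>(2) refl]) (rule k\<rho>m)
  have k\<eta>m: "k\<eta> \<in> borel \<rightarrow>\<^sub>M subprob_algebra borel"
    unfolding k\<eta>_def[abs_def]
    using kernel_meas[OF Kmeas cont_meas[OF continuous_on_id]] by simp
  define \<rho> where "\<rho> = \<pi> \<bind> k\<rho>"
  have \<rho>sets: "sets \<rho> = sets borel"
    unfolding \<rho>_def by (rule sets_bind[OF _ \<pi>ne]) (simp add: k\<rho>_def)
  have \<rho>prob: "prob_space \<rho>"
    unfolding \<rho>_def
  proof (rule prob_space.prob_space_bind[OF \<pi>(1) _ k\<rho>m'])
    show "AE x in \<pi>. prob_space (k\<rho> x)"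
      by (rule AE_I2) (simp add: k\<rho>_def prob_space.prob_space_distr[OF Kprob pair_const_meas[OF Ksets]])
  qed
  have \<rho>m: "\<rho> \<rightarrow>\<^sub>M N = borel \<rightarrow>\<^sub>M N" for N :: "'z measure"
    by (rule measurable_cong_sets[OF \<rho>sets refl])
  define h1 where "h1 q = (snd (fst q), snd q)" for q :: "(((real^'n) \<times> 'u) \<times> ((real^'n) \<times> 'u)) \<times> (real^'n)"
  define h2 where "h2 q = (fst (fst q), snd q)" for q :: "(((real^'n) \<times> 'u) \<times> ((real^'n) \<times> 'u)) \<times> (real^'n)"
  have h1m: "h1 \<in> borel \<rightarrow>\<^sub>M borel" unfolding h1_def[abs_def] by (auto intro!: cont_meas continuous_intros)
  have h2m: "h2 \<in> borel \<rightarrow>\<^sub>M borel" unfolding h2_def[abs_def] by (auto intro!: cont_meas continuous_intros)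
  have fm: "(\<lambda>q::(((real^'n) \<times> 'u) \<times> ((real^'n) \<times> 'u)) \<times> (real^'n). fst q) \<in> borel \<rightarrow>\<^sub>M borel"
    by (auto intro!: cont_meas continuous_intros)
  have h1m': "h1 \<in> \<rho> \<rightarrow>\<^sub>M borel" by (subst measurable_cong_sets[OF \<rho>sets refl]) (rule h1m)
  have h2m': "h2 \<in> \<rho> \<rightarrow>\<^sub>M borel" by (subst measurable_cong_sets[OF \<rho>sets refl]) (rule h2m)
  have fm': "(\<lambda>q::(((real^'n) \<times> 'u) \<times> ((real^'n) \<times> 'u)) \<times> (real^'n). fst q) \<in> \<rho> \<rightarrow>\<^sub>M borel"
    by (subst measurable_cong_sets[OF \<rho>sets refl]) (rule fm)
  have snd\<pi>: "(\<lambda>p::((real^'n) \<times> 'u) \<times> ((real^'n) \<times> 'u). snd p) \<in> \<pi> \<rightarrow>\<^sub>M borel"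
    by (subst measurable_cong_sets[OF \<pi>(2) refl]) (auto intro!: cont_meas continuous_intros)
  have fst\<pi>: "(\<lambda>p::((real^'n) \<times> 'u) \<times> ((real^'n) \<times> 'u). fst p) \<in> \<pi> \<rightarrow>\<^sub>M borel"
    by (subst measurable_cong_sets[OF \<pi>(2) refl]) (auto intro!: cont_meas continuous_intros)

  have \<eta>\<rho>: "distr \<rho> borel h1 = \<eta>"
  proof -
    have "distr \<rho> borel h1 = \<pi> \<bind> (\<lambda>p. distr (k\<rho> p) borel h1)"
      unfolding \<rho>_def by (rule distr_bind[OF k\<rho>m' \<pi>ne h1m])
    also have "\<dots> = \<pi> \<bind> (\<lambda>p. k\<eta> (snd p))"
      by (rule bind_cong[OF refl])
         (simp add: k\<rho>_def k\<eta>_def distr_distr[OF h1m pair_const_meas[OF Ksets]] comp_def h1_def)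
    also have "\<dots> = distr \<pi> borel snd \<bind> k\<eta>"
      by (rule bind_distr[symmetric, OF snd\<pi> k\<eta>m \<pi>ne])
    also have "\<dots> = \<eta>" using \<pi>(4) assms(14) by (simp add: k\<eta>_def[abs_def])
    finally show ?thesis .
  qed
  have cp\<rho>: "distr \<rho> borel h2 = compose_plan \<pi> K"
  proof -
    have "distr \<rho> borel h2 = \<pi> \<bind> (\<lambda>p. distr (k\<rho> p) borel h2)"
      unfolding \<rho>_def by (rule distr_bind[OF k\<rho>m' \<pi>ne h2m])
    also have "\<dots> = compose_plan \<pi> K"
      unfolding compose_plan_def
      by (rule bind_cong[OF refl])
         (simp add: k\<rho>_def distr_distr[OF h2m pair_const_meas[OF Ksets]] comp_def h2_def)
    finally show ?thesis .
  qed
  have \<pi>\<rho>: "distr \<rho> borel fst = \<pi>"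
  proof -
    have "distr \<rho> borel fst = \<pi> \<bind> (\<lambda>p. distr (k\<rho> p) borel fst)"
      unfolding \<rho>_def using distr_bind[OF k\<rho>m' \<pi>ne fm] by simp
    also have "\<dots> = \<pi> \<bind> return borel"
      by (rule bind_cong[OF refl])
         (simp add: k\<rho>_def distr_distr[OF fm pair_const_meas[OF Ksets]] comp_def prob_space.distr_const[OF Kprob])
    also have "\<dots> = \<pi>" by (rule bind_return''[OF \<pi>(2)])
    finally show ?thesis .
  qed

  define G where "G q = (Xi \<tau> (snd (fst q), snd q), Xi \<theta> (fst (fst q), snd q))"
    for q :: "(((real^'n) \<times> 'u) \<times> ((real^'n) \<times> 'u)) \<times> (real^'n)"
  have Gm: "G \<in> \<rho> \<rightarrow>\<^sub>M borel" unfolding \<rho>m G_def[abs_def] by (rule G_meas)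
  define \<gamma> where "\<gamma> = distr \<rho> borel G"
  have fstP: "(\<lambda>z::((real^'n) \<times> 'u) \<times> ((real^'n) \<times> 'u). fst z) \<in> borel \<rightarrow>\<^sub>M borel"
    by (auto intro!: cont_meas continuous_intros)
  have sndP: "(\<lambda>z::((real^'n) \<times> 'u) \<times> ((real^'n) \<times> 'u). snd z) \<in> borel \<rightarrow>\<^sub>M borel"
    by (auto intro!: cont_meas continuous_intros)
  have \<gamma>c: "\<gamma> \<in> couplings (distr \<eta> borel (Xi \<tau>)) (distr (compose_plan \<pi> K) borel (Xi \<theta>))"
  proof -
    have "distr \<gamma> borel fst = distr \<rho> borel (Xi \<tau> \<circ> h1)"
      unfolding \<gamma>_def using distr_distr[OF fstP Gm] by (simp add: comp_def G_def h1_def)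
    also have "\<dots> = distr \<eta> borel (Xi \<tau>)"
      using distr_distr[OF Xi_meas h1m', of \<tau>] \<eta>\<rho> by simp
    finally have 1: "distr \<gamma> borel fst = distr \<eta> borel (Xi \<tau>)" .
    have "distr \<gamma> borel snd = distr \<rho> borel (Xi \<theta> \<circ> h2)"
      unfolding \<gamma>_def using distr_distr[OF sndP Gm] by (simp add: comp_def G_def h2_def)
    also have "\<dots> = distr (compose_plan \<pi> K) borel (Xi \<theta>)"
      using distr_distr[OF Xi_meas h2m', of \<theta>] cp\<rho> by simp
    finally have 2: "distr \<gamma> borel snd = distr (compose_plan \<pi> K) borel (Xi \<theta>)" .
    show ?thesis unfolding couplings_def using 1 2 prob_space.prob_space_distr[OF \<rho>prob Gm]
      by (simp add: \<gamma>_def)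
  qed

  have pm: "(\<lambda>z::((real^'n) \<times> 'u) \<times> ((real^'n) \<times> 'u). ennreal ((pdist (fst z) (snd z))^2)) \<in> borel_measurable borel"
    using cont_meas[OF pdist_cont] by measurable
  define a where "a q = pdist (fst (fst q)) (snd (fst q))" for q :: "(((real^'n) \<times> 'u) \<times> ((real^'n) \<times> 'u)) \<times> (real^'n)"
  have am: "a \<in> borel_measurable \<rho>"
    unfolding \<rho>m a_def[abs_def]
    using measurable_compose[OF fm cont_meas[OF pdist_cont]] by simp
  have a0: "0 \<le> a q" for q unfolding a_def pdist_def by simp

  have AE\<rho>: "AE q in \<rho>. norm (snd q) \<le> c"
  proof -
    have "AE p in \<eta>. norm (snd p) \<le> c"
      using assms(7) by (rule eventually_mono) auto
    then have "AE p in distr \<rho> borel h1. norm (snd p) \<le> c" by (simp only: \<eta>\<rho>)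
    moreover have "{x \<in> space borel. norm (snd x) \<le> c} \<in> sets (borel :: (((real^'n) \<times> 'u) \<times> (real^'n)) measure)"
      by (auto intro!: borel_closed closed_Collect_le continuous_intros)
    ultimately show ?thesis
      using AE_distr_iff[OF h1m', of "\<lambda>p. norm (snd p) \<le> c"] by (simp add: h1_def)
  qed

  have W2c\<gamma>: "W2cost \<gamma> = (\<integral>\<^sup>+q. ennreal ((pdist (fst (G q)) (snd (G q)))^2) \<partial>\<rho>)"
    unfolding W2cost_def \<gamma>_def
    by (rule nn_integral_distr[OF Gm]) (use pm in simp)
  also have "\<dots> \<le> (\<integral>\<^sup>+q. ennreal ((a q + B)^2) \<partial>\<rho>)"
  proof (rule nn_integral_mono_AE)
    show "AE q in \<rho>. ennreal ((pdist (fst (G q)) (snd (G q)))^2) \<le> ennreal ((a q + B)^2)"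
      using AE\<rho>
    proof (rule eventually_mono)
      fix q :: "(((real^'n) \<times> 'u) \<times> ((real^'n) \<times> 'u)) \<times> (real^'n)"
      assume q: "norm (snd q) \<le> c"
      have "pdist (fst (G q)) (snd (G q)) \<le> pdist (snd (fst q)) (fst (fst q)) + \<bar>\<tau> - \<theta>\<bar> * norm (snd q)"
        unfolding G_def using pdist_Xi by simp
      also have "\<dots> \<le> a q + B"
        unfolding a_def B_def using q pdist_sym[of "snd (fst q)" "fst (fst q)"]
        by (simp add: mult_left_mono)
      finally have "pdist (fst (G q)) (snd (G q)) \<le> a q + B" .
      moreover have "0 \<le> pdist (fst (G q)) (snd (G q))" unfolding pdist_def by simp
      ultimately have "(pdist (fst (G q)) (snd (G q)))^2 \<le> (a q + B)^2" by (rule power_mono)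
      then show "ennreal ((pdist (fst (G q)) (snd (G q)))^2) \<le> ennreal ((a q + B)^2)"
        by (rule ennreal_leI)
    qed
  qed
  finally have W2c\<gamma>le: "W2cost \<gamma> \<le> (\<integral>\<^sup>+q. ennreal ((a q + B)^2) \<partial>\<rho>)" .

  have Ia: "(\<integral>\<^sup>+q. ennreal ((a q)^2) \<partial>\<rho>) = W2cost \<pi>"
  proof -
    have "W2cost \<pi> = W2cost (distr \<rho> borel fst)" using \<pi>\<rho> by simp
    also have "\<dots> = (\<integral>\<^sup>+q. ennreal ((a q)^2) \<partial>\<rho>)"
      unfolding W2cost_def a_def
      by (rule nn_integral_distr) (use fm' pm in simp_all)
    finally show ?thesis by simp
  qed

  define S where "S = cbox (0::real^'n) 1 \<times> U"
  have Sc: "compact S" unfolding S_def by (intro compact_Times compact_cbox assms(2))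
  have Sb: "S \<in> sets borel" using Sc by (intro borel_closed compact_imp_closed)
  have torS: "z \<in> tor \<times> U \<Longrightarrow> z \<in> S" for z
    unfolding S_def tor_def by (auto simp: mem_box_cart less_imp_le)
  have AES: "AE z in \<mu>. z \<in> S" if "P2 U \<mu>" for \<mu> :: "((real^'n) \<times> 'u) measure"
    using that unfolding P2_def by (auto elim!: eventually_mono intro: torS)
  have Sb': "{x \<in> space borel. x \<in> S} \<in> sets borel" using Sb by simp
  have "AE z in distr \<pi> borel fst. z \<in> S" unfolding \<pi>(3) by (rule AES[OF assms(4)])
  then have AE\<pi>1: "AE z in \<pi>. fst z \<in> S"
    using AE_distr_iff[OF fst\<pi> Sb'] by blast
  have "AE z in distr \<pi> borel snd. z \<in> S" unfolding \<pi>(4) by (rule AES[OF assms(3)])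
  then have AE\<pi>2: "AE z in \<pi>. snd z \<in> S"
    using AE_distr_iff[OF snd\<pi> Sb'] by blast
  have "compact ((\<lambda>z. pdist (fst z) (snd z)) ` (S \<times> S))"
    by (intro compact_continuous_image continuous_on_subset[OF pdist_cont] compact_Times Sc) auto
  then have "bounded ((\<lambda>z. pdist (fst z) (snd z)) ` (S \<times> S))" by (rule compact_imp_bounded)
  then obtain Mb where Mb0: "\<forall>x\<in>(\<lambda>z. pdist (fst z) (snd z)) ` (S \<times> S). \<bar>x\<bar> \<le> Mb"
    unfolding bounded_real by blast
  have Mb: "\<bar>pdist (fst z) (snd z)\<bar> \<le> Mb" if "z \<in> S \<times> S" for z
    using Mb0 that by blast
  have "W2cost \<pi> \<le> (\<integral>\<^sup>+z. ennreal (Mb^2) \<partial>\<pi>)"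
    unfolding W2cost_def
  proof (rule nn_integral_mono_AE)
    show "AE z in \<pi>. ennreal ((pdist (fst z) (snd z))^2) \<le> ennreal (Mb^2)"
      using AE\<pi>1 AE\<pi>2
    proof eventually_elim
      case (elim z)
      then have "\<bar>pdist (fst z) (snd z)\<bar> \<le> Mb" using Mb[of z] by (simp add: mem_Times_iff)
      moreover have "0 \<le> pdist (fst z) (snd z)" unfolding pdist_def by simp
      ultimately have "pdist (fst z) (snd z) \<le> Mb" by simp
      then have "(pdist (fst z) (snd z))^2 \<le> Mb^2"
        using \<open>0 \<le> pdist (fst z) (snd z)\<close> by (rule power_mono)
      then show ?case by (rule ennreal_leI)
    qed
  qed
  also have "\<dots> = ennreal (Mb^2)" using prob_space.emeasure_space_1[OF \<pi>(1)] by simp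
  finally have fin: "W2cost \<pi> < top" by (simp add: le_less_trans)

  have Ieq: "(INF \<sigma>\<in>couplings \<alpha> \<alpha>'. W2cost \<sigma>) = W2cost \<pi>"
    using \<pi>(5) INF_couplings_sym by metis
  define W where "W = W2 \<alpha> \<alpha>'"
  have W0: "0 \<le> W" unfolding W_def W2_def by simp
  have WI: "ennreal (W^2) = W2cost \<pi>"
    unfolding W_def W2_def Ieq using fin by simp
  have key: "(\<integral>\<^sup>+q. ennreal ((a q + B)^2) \<partial>\<rho>) \<le> ennreal ((W + B)^2)"
    by (rule minkowski_aux[OF \<rho>prob am a0 _ W0 B0]) (simp add: Ia WI)
  have "(INF \<sigma>\<in>couplings (distr \<eta> borel (Xi \<tau>)) (distr (compose_plan \<pi> K) borel (Xi \<theta>)). W2cost \<sigma>)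
        \<le> W2cost \<gamma>" using \<gamma>c by (rule INF_lower)
  also have "\<dots> \<le> ennreal ((W + B)^2)" using W2c\<gamma>le key by (rule order_trans)
  finally have "enn2real (INF \<sigma>\<in>couplings (distr \<eta> borel (Xi \<tau>)) (distr (compose_plan \<pi> K) borel (Xi \<theta>)). W2cost \<sigma>)
        \<le> (W + B)^2" by (intro enn2real_leI) simp_all
  then have "W2 (distr \<eta> borel (Xi \<tau>)) (distr (compose_plan \<pi> K) borel (Xi \<theta>)) \<le> sqrt ((W + B)^2)"
    unfolding W2_def by (rule real_sqrt_le_mono)
  also have "\<dots> = W + B" using W0 B0 by simp
  finally show ?thesis unfolding W_def B_def .
qed

end
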